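(* Let $0<\tau\le L$ and let $f:\mathbb{R}^n\to\mathbb{R}$ be strongly convex with constant $\tau$ with $L$-Lipschitz gradient, with minimizer $x^*$. Consider the following randomized coordinate-descent algorithm with input $x_0\in\mathbb{R}^n$ and $\eta>0$: for $k=0,1,2,\dots$, choose $d_k=\mathbf{e}_i$ with $i\in\{1,\dots,n\}$ uniformly at random (independently of the past), obtain from a line search a step $\alpha_k$ with $|\alpha_k-\alpha^*|\le\eta$ where $\alpha^*=\arg\min_{\alpha\in\mathbb{R}} f(x_k+\alpha d_k)$, and set $x_{k+1}=x_k+\alpha_k d_k$. Assume that for the given $\eta$ each such line search uses at most $T_\ell(\eta)$ queries to a pairwise comparison oracle. If $x_K$ is the estimate of $x^*$ produced after requesting no more than $K$ pairwise comparisons, then \[ \sup_f \mathbb{E}[ f(x_{K})-f(x^* ) ] \leq \frac{4nL^2 \eta^2}{\tau} \quad \text{ whenever } \quad K \geq \frac{4n L}{ \tau} \log\left( \frac{f(x_0)-f(x^* )}{\eta^2\, 2 n L^2 / \tau} \right) T_\ell(\eta), \] where the expectation is with respect to the random choice of $d_k$ at each iteration and the supremum is over such $f$.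
   Context: $\mathbf{e}_i$ denotes the $i$-th standard basis vector of $\mathbb{R}^n$. A function $f$ is strongly convex with constant $\tau>0$ if $f(y)\ge f(x)+\langle\nabla f(x),y-x\rangle+\frac{\tau}{2}\|x-y\|^2$ for all $x,y$; its gradient is $L$-Lipschitz if $\|\nabla f(x)-\nabla f(y)\|\le L\|x-y\|$. A pairwise comparison oracle answers queries $(x,y)$ with a value in $\{-1,1\}$ intended to indicate $\mathrm{sign}\{f(y)-f(x)\}$. *)

theory Defs
  imports "HOL-Analysis.Analysis" "HOL-Probability.Probability"
begin

text \<open>Randomized coordinate descent with inexact line search.
  ls k x i is the step returned by the line search at iteration k, from point x,
  along direction e_i = axis i 1; d is the sequence of chosen coordinates.\<close>

fun cd_iter :: "(nat \<Rightarrow> real^'n \<Rightarrow> 'n \<Rightarrow> real) \<Rightarrow> real^'n \<Rightarrow> (nat \<Rightarrow> 'n) \<Rightarrow> nat \<Rightarrow> real^'n" where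
  "cd_iter ls x0 d 0 = x0"
| "cd_iter ls x0 d (Suc k) =
     (let x = cd_iter ls x0 d k in x + ls k x (d k) *\<^sub>R axis (d k) 1)"

end

theory Submission
  imports Defs
begin

lemma descent_1d:
  fixes \<phi> d :: "real \<Rightarrow> real" and L s t :: real
  assumes D: "\<And>u. (\<phi> has_real_derivative d u) (at u)"
    and Lip: "\<And>u v. \<bar>d u - d v\<bar> \<le> L * \<bar>u - v\<bar>"
  shows "\<phi> t \<le> \<phi> s + (t - s) * d s + L / 2 * (t - s)\<^sup>2"
proof -
  define \<psi> where "\<psi> u = \<phi> u - \<phi> s - (u - s) * d s - L / 2 * (u - s)\<^sup>2" for u
  have D\<psi>: "(\<psi> has_real_derivative (d u - d s - L * (u - s))) (at u)" for u
    unfolding \<psi>_def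
    by (auto intro!: derivative_eq_intros D simp: power2_eq_square algebra_simps)
  have "\<psi> t \<le> \<psi> s"
  proof (cases "s \<le> t")
    case True
    show ?thesis
    proof (rule DERIV_nonpos_imp_nonincreasing[OF True])
      fix u assume "s \<le> u" "u \<le> t"
      moreover have "d u - d s \<le> L * \<bar>u - s\<bar>" using Lip[of u s] by linarith
      ultimately show "\<exists>y. (\<psi> has_real_derivative y) (at u) \<and> y \<le> 0"
        using D\<psi> by (intro exI[of _ "d u - d s - L * (u - s)"]) auto
    qed
  next
    case False
    show ?thesis
    proof (rule DERIV_nonneg_imp_nondecreasing[of t s \<psi>])
      show "t \<le> s" using False by simp
      fix u assume "t \<le> u" "u \<le> s"
      moreover have "d s - d u \<le> L * \<bar>u - s\<bar>" using Lip[of u s] by linarith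
      ultimately show "\<exists>y. (\<psi> has_real_derivative y) (at u) \<and> y \<ge> 0"
        by (intro exI[of _ "d u - d s - L * (u - s)"] conjI D\<psi>) (simp add: algebra_simps)
    qed
  qed
  then show ?thesis unfolding \<psi>_def by simp
qed

lemma exists_min_1d:
  fixes \<phi> d :: "real \<Rightarrow> real" and \<tau> :: real
  assumes D: "\<And>u. (\<phi> has_real_derivative d u) (at u)"
    and tau: "0 < \<tau>"
    and sc: "\<And>t. \<phi> t \<ge> \<phi> 0 + t * d 0 + \<tau> / 2 * t\<^sup>2"
  shows "\<exists>a. \<forall>b. \<phi> a \<le> \<phi> b"
proof -
  define R where "R = 2 * \<bar>d 0\<bar> / \<tau> + 1"
  have R0: "0 \<le> R" unfolding R_def using tau by simp
  have cont: "continuous_on {-R..R} \<phi>"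
    using D by (meson DERIV_continuous continuous_at_imp_continuous_on)
  obtain a where a: "a \<in> {-R..R}" and amin: "\<And>y. y \<in> {-R..R} \<Longrightarrow> \<phi> a \<le> \<phi> y"
    using continuous_attains_inf[OF compact_Icc _ cont] R0 by auto
  have "\<phi> a \<le> \<phi> b" for b
  proof (cases "b \<in> {-R..R}")
    case True then show ?thesis by (rule amin)
  next
    case False
    then have bR: "\<bar>b\<bar> \<ge> 2 * \<bar>d 0\<bar> / \<tau>" unfolding R_def by auto
    then have "\<tau> / 2 * \<bar>b\<bar> \<ge> \<bar>d 0\<bar>" using tau by (simp add: field_simps)
    then have "\<tau> / 2 * \<bar>b\<bar> * \<bar>b\<bar> \<ge> \<bar>d 0\<bar> * \<bar>b\<bar>"
      by (rule mult_right_mono) simp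
    moreover have "b * d 0 \<ge> - (\<bar>d 0\<bar> * \<bar>b\<bar>)"
      by (metis abs_ge_minus_self abs_mult minus_le_iff mult.commute)
    moreover have "\<bar>b\<bar> * \<bar>b\<bar> = b\<^sup>2" by (simp add: power2_eq_square abs_mult_self_eq)
    ultimately have "\<phi> b \<ge> \<phi> 0" using sc[of b] by (smt (verit) mult.assoc)
    moreover have "\<phi> a \<le> \<phi> 0" using amin R0 by auto
    ultimately show ?thesis by simp
  qed
  then show ?thesis by blast
qed

lemma coord_step:
  fixes f :: "real^'n \<Rightarrow> real" and g :: "real^'n \<Rightarrow> real^'n"
    and \<tau> L \<eta> :: real and x :: "real^'n" and i :: 'n and lam :: real
  assumes tau_pos: "0 < \<tau>" and tau_le_L: "\<tau> \<le> L"
    and grad: "\<And>x. (f has_derivative (\<lambda>h. g x \<bullet> h)) (at x)"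
    and strongly_convex: "\<And>x y. f y \<ge> f x + g x \<bullet> (y - x) + \<tau> / 2 * (norm (x - y))\<^sup>2"
    and lipschitz_grad: "\<And>x y. norm (g x - g y) \<le> L * norm (x - y)"
    and ls: "\<And>\<alpha>. (\<forall>\<beta>. f (x + \<alpha> *\<^sub>R axis i 1) \<le> f (x + \<beta> *\<^sub>R axis i 1))
                         \<Longrightarrow> \<bar>lam - \<alpha>\<bar> \<le> \<eta>"
  shows "f (x + lam *\<^sub>R axis i 1) \<le> f x - (g x $ i)\<^sup>2 / (2 * L) + L * \<eta>\<^sup>2 / 2"
proof -
  define e :: "real^'n" where "e = axis i 1"
  define \<phi> where "\<phi> t = f (x + t *\<^sub>R e)" for t
  define d where "d t = g (x + t *\<^sub>R e) $ i" for t
  have L0: "0 < L" using tau_pos tau_le_L by simp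
  have D: "(\<phi> has_real_derivative d t) (at t)" for t
  proof -
    have "((\<lambda>t. x + t *\<^sub>R e) has_derivative (\<lambda>h. h *\<^sub>R e)) (at t)"
      by (auto intro!: derivative_eq_intros)
    from has_derivative_compose[OF this grad]
    have "(\<phi> has_derivative (\<lambda>h. g (x + t *\<^sub>R e) \<bullet> (h *\<^sub>R e))) (at t)"
      unfolding \<phi>_def .
    moreover have "(\<lambda>h. g (x + t *\<^sub>R e) \<bullet> (h *\<^sub>R e)) = (*) (d t)"
      by (auto simp: d_def e_def inner_axis)
    ultimately show ?thesis by (simp add: has_field_derivative_def)
  qed
  have Lip: "\<bar>d u - d v\<bar> \<le> L * \<bar>u - v\<bar>" for u v
  proof -
    have "\<bar>d u - d v\<bar> = \<bar>(g (x + u *\<^sub>R e) - g (x + v *\<^sub>R e)) $ i\<bar>" by (simp add: d_def)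
    also have "\<dots> \<le> norm (g (x + u *\<^sub>R e) - g (x + v *\<^sub>R e))" by (rule component_le_norm_cart)
    also have "\<dots> \<le> L * norm ((x + u *\<^sub>R e) - (x + v *\<^sub>R e))" by (rule lipschitz_grad)
    also have "norm ((x + u *\<^sub>R e) - (x + v *\<^sub>R e)) = \<bar>u - v\<bar>"
      by (simp add: e_def flip: scaleR_diff_left)
    finally show ?thesis .
  qed
  have sc: "\<phi> t \<ge> \<phi> 0 + t * d 0 + \<tau> / 2 * t\<^sup>2" for t
  proof -
    have h1: "g x \<bullet> ((x + t *\<^sub>R e) - x) = t * d 0" by (simp add: d_def e_def inner_axis)
    have h2: "(norm (x - (x + t *\<^sub>R e)))\<^sup>2 = t\<^sup>2" by (simp add: e_def power2_abs)
    show ?thesis using strongly_convex[of x "x + t *\<^sub>R e"] unfolding h1 h2 \<phi>_def by simp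
  qed
  obtain a where amin: "\<And>b. \<phi> a \<le> \<phi> b" using exists_min_1d[OF D tau_pos sc] by blast
  have da: "d a = 0"
    by (rule DERIV_local_min[OF D, of 1]) (auto simp: amin)
  have la: "\<bar>lam - a\<bar> \<le> \<eta>" using ls[of a] amin unfolding \<phi>_def e_def by blast
  have sq: "(lam - a)\<^sup>2 \<le> \<eta>\<^sup>2"
    by (metis abs_ge_zero la power2_abs power_mono)
  have "\<phi> lam \<le> \<phi> a + (lam - a) * d a + L / 2 * (lam - a)\<^sup>2" by (rule descent_1d[OF D Lip])
  also have "\<dots> \<le> \<phi> a + L / 2 * \<eta>\<^sup>2" using da sq L0 by simp
  also have "\<phi> a \<le> \<phi> (- d 0 / L)" by (rule amin)
  also have "\<phi> (- d 0 / L) \<le> \<phi> 0 + (- d 0 / L - 0) * d 0 + L / 2 * (- d 0 / L - 0)\<^sup>2"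
    by (rule descent_1d[OF D Lip])
  also have "\<dots> = \<phi> 0 - (d 0)\<^sup>2 / (2 * L)"
    using L0 by (simp add: field_simps power2_eq_square)
  finally show ?thesis by (simp add: \<phi>_def d_def e_def)
qed

lemma pl_ineq:
  fixes f :: "real^'n \<Rightarrow> real" and g :: "real^'n \<Rightarrow> real^'n"
  assumes tau_pos: "0 < \<tau>"
    and strongly_convex: "\<And>x y. f y \<ge> f x + g x \<bullet> (y - x) + \<tau> / 2 * (norm (x - y))\<^sup>2"
  shows "f x - f xstar \<le> (norm (g x))\<^sup>2 / (2 * \<tau>)"
proof -
  define h where "h = xstar - x"
  have SC: "f xstar \<ge> f x + g x \<bullet> h + \<tau> / 2 * (norm h)\<^sup>2"
    using strongly_convex[of x xstar] by (simp add: h_def norm_minus_commute)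
  moreover have "0 \<le> (norm (g x + \<tau> *\<^sub>R h))\<^sup>2" by simp
  moreover have "(norm (g x + \<tau> *\<^sub>R h))\<^sup>2 = (norm (g x))\<^sup>2 + 2 * \<tau> * (g x \<bullet> h) + \<tau>\<^sup>2 * (norm h)\<^sup>2"
    unfolding power2_norm_eq_inner
    by (simp add: inner_add_left inner_add_right inner_commute algebra_simps power2_eq_square)
  ultimately have P: "0 \<le> (norm (g x))\<^sup>2 + 2 * \<tau> * (g x \<bullet> h) + \<tau>\<^sup>2 * (norm h)\<^sup>2"
    by linarith
  have B: "2 * \<tau> * (- (g x \<bullet> h) - \<tau> / 2 * (norm h)\<^sup>2) \<le> (norm (g x))\<^sup>2"
    using P by (simp add: algebra_simps power2_eq_square)
  have "f x - f xstar \<le> - (g x \<bullet> h) - \<tau> / 2 * (norm h)\<^sup>2"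
    using SC by simp
  then have "2 * \<tau> * (f x - f xstar) \<le> 2 * \<tau> * (- (g x \<bullet> h) - \<tau> / 2 * (norm h)\<^sup>2)"
    using tau_pos by (intro mult_left_mono) auto
  with B have "2 * \<tau> * (f x - f xstar) \<le> (norm (g x))\<^sup>2" by linarith
  then show ?thesis using tau_pos by (simp add: field_simps)
qed

lemma norm_sq_sum: "(norm (v :: real^'n))\<^sup>2 = (\<Sum>i\<in>UNIV. (v $ i)\<^sup>2)"
  unfolding power2_norm_eq_inner inner_vec_def by (simp add: power2_eq_square)

lemma final_arith:
  fixes E0 B a :: real and m :: nat
  assumes E0: "0 \<le> E0" and B: "0 < B" and a0: "0 < a" and a1: "a \<le> 1"
    and m: "real m \<ge> 4 / a * ln (E0 / B) - 1"
  shows "(1 - a) ^ m * E0 \<le> 7 / 4 * B"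
proof (cases "E0 \<le> 7 / 4 * B")
  case True
  have "(1 - a) ^ m \<le> 1" using a0 a1 by (simp add: power_le_one)
  then have "(1 - a) ^ m * E0 \<le> E0" using E0 by (simp add: mult_left_le_one_le a1)
  with True show ?thesis by simp
next
  case False
  define R where "R = E0 / B"
  have R: "R > 7 / 4" using False B unfolding R_def by (simp add: field_simps)
  have E0R: "E0 = R * B" using B unfolding R_def by simp
  have "(1 - a) ^ m \<le> exp (- a) ^ m"
    using a1 exp_ge_add_one_self[of "-a"] by (intro power_mono) auto
  also have "\<dots> = exp (- (a * real m))" by (simp add: exp_of_nat_mult[symmetric] mult.commute)
  also have "\<dots> \<le> exp (1 - 4 * ln R)"
  proof -
    have "a * real m \<ge> a * (4 / a * ln R - 1)" using m a0 unfolding R_def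
      by (intro mult_left_mono) auto
    also have "a * (4 / a * ln R - 1) = 4 * ln R - a" using a0 by (simp add: field_simps)
    finally show ?thesis using a1 by simp
  qed
  also have "exp (1 - 4 * ln R) = exp 1 / R ^ 4"
    using R by (simp add: exp_diff exp_of_nat_mult[of 4, simplified])
  finally have *: "(1 - a) ^ m \<le> exp 1 / R ^ 4" .
  have e3: "exp (1::real) \<le> 3" using e_approx_32 unfolding abs_le_iff by simp
  have "(1 - a) ^ m * E0 \<le> exp 1 / R ^ 4 * (R * B)"
    using mult_right_mono[OF * E0] E0R by simp
  also have "\<dots> = exp 1 * B / R ^ 3" using R by (simp add: field_simps power_eq_if)
  also have "\<dots> \<le> 3 * B / R ^ 3" using e3 B R by (intro divide_right_mono mult_right_mono) auto
  also have "\<dots> \<le> 3 * B / (7/4) ^ 3" using R B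
    by (intro divide_left_mono power_mono mult_pos_pos) auto
  also have "\<dots> \<le> 7 / 4 * B" using B by (simp add: power3_eq_cube field_simps)
  finally show ?thesis .
qed

lemma cd_iter_agree:
  "(\<And>j. j < k \<Longrightarrow> d j = d' j) \<Longrightarrow> cd_iter ls x0 d k = cd_iter ls x0 d' k"
  by (induction k) (auto simp: Let_def)

theorem theorem5:
  fixes f :: "real^'n \<Rightarrow> real" and g :: "real^'n \<Rightarrow> real^'n"
    and \<tau> L \<eta> :: real and x0 xstar :: "real^'n"
    and ls :: "nat \<Rightarrow> real^'n \<Rightarrow> 'n \<Rightarrow> real"
    and T K m :: nat
  assumes tau_pos: "0 < \<tau>" and tau_le_L: "\<tau> \<le> L" and eta_pos: "0 < \<eta>"
    and grad: "\<And>x. (f has_derivative (\<lambda>h. g x \<bullet> h)) (at x)"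
    and strongly_convex: "\<And>x y. f y \<ge> f x + g x \<bullet> (y - x) + \<tau> / 2 * (norm (x - y))\<^sup>2"
    and lipschitz_grad: "\<And>x y. norm (g x - g y) \<le> L * norm (x - y)"
    and minimizer: "\<And>y. f xstar \<le> f y"
    and line_search: "\<And>k x i \<alpha>. (\<forall>\<beta>. f (x + \<alpha> *\<^sub>R axis i 1) \<le> f (x + \<beta> *\<^sub>R axis i 1))
                         \<Longrightarrow> \<bar>ls k x i - \<alpha>\<bar> \<le> \<eta>"
    and T_pos: "0 < T"
    and K_large: "real K \<ge> 4 * real CARD('n) * L / \<tau>
                     * ln ((f x0 - f xstar) / (\<eta>\<^sup>2 * 2 * real CARD('n) * L\<^sup>2 / \<tau>)) * real T"
    and iterations: "K div T \<le> m"
  shows "measure_pmf.expectation (pmf_of_set ({..<m} \<rightarrow>\<^sub>E (UNIV :: 'n set)))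
           (\<lambda>d. f (cd_iter ls x0 d m) - f xstar)
         \<le> 4 * real CARD('n) * L\<^sup>2 * \<eta>\<^sup>2 / \<tau>"
proof -
  define N where "N = CARD('n)"
  define n where "n = real N"
  have N0: "0 < N" unfolding N_def by simp
  have n1: "1 \<le> n" using N0 unfolding n_def by simp
  have L0: "0 < L" using tau_pos tau_le_L by simp
  define a where "a = \<tau> / (n * L)"
  have a0: "0 < a" unfolding a_def using tau_pos L0 n1 by simp
  have a1: "a \<le> 1"
  proof -
    have "L \<le> n * L" using L0 n1 by simp
    then have "\<tau> \<le> n * L" using tau_le_L by linarith
    then show ?thesis using L0 n1 by (simp add: a_def pos_divide_le_eq)
  qed
  define C where "C = L * \<eta>\<^sup>2 / 2"
  define D where "D = n * L\<^sup>2 * \<eta>\<^sup>2 / (2 * \<tau>)"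
  define P where "P (k::nat) = ({..<k} \<rightarrow>\<^sub>E (UNIV :: 'n set))" for k
  define F where "F k d = f (cd_iter ls x0 d k) - f xstar" for k d
  define A where "A k = (\<Sum>d\<in>P k. F k d) / real N ^ k" for k
  have finP: "finite (P k)" for k unfolding P_def by (simp add: finite_PiE)
  have cardP: "card (P k) = N ^ k" for k unfolding P_def N_def by (simp add: card_PiE)
  have neP: "P k \<noteq> {}" for k using cardP[of k] N0 by auto
  have point: "(\<Sum>i\<in>UNIV. f (y + ls k y i *\<^sub>R axis i 1) - f xstar)
      \<le> (n - \<tau> / L) * (f y - f xstar) + n * C" for k y
  proof -
    have "(\<Sum>i\<in>UNIV. f (y + ls k y i *\<^sub>R axis i 1) - f xstar)
        \<le> (\<Sum>i\<in>UNIV. (f y - f xstar) - (g y $ i)\<^sup>2 / (2 * L) + C)"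
      unfolding C_def
    proof (intro sum_mono)
      fix i
      show "f (y + ls k y i *\<^sub>R axis i 1) - f xstar \<le> f y - f xstar - (g y $ i)\<^sup>2 / (2 * L) + L * \<eta>\<^sup>2 / 2"
        using coord_step[where x=y and i=i and lam="ls k y i", OF tau_pos tau_le_L grad strongly_convex lipschitz_grad line_search[where k=k and x=y and i=i]]
        by simp
    qed
    also have "\<dots> = n * (f y - f xstar) - (norm (g y))\<^sup>2 / (2 * L) + n * C"
      by (simp add: sum.distrib sum_subtractf norm_sq_sum sum_divide_distrib n_def N_def)
    finally have S: "(\<Sum>i\<in>UNIV. f (y + ls k y i *\<^sub>R axis i 1) - f xstar)
        \<le> n * (f y - f xstar) - (norm (g y))\<^sup>2 / (2 * L) + n * C" .
    have G: "(norm (g y))\<^sup>2 / (2 * L) \<ge> \<tau> / L * (f y - f xstar)"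
    proof -
      have "f y - f xstar \<le> (norm (g y))\<^sup>2 / (2 * \<tau>)"
        by (rule pl_ineq[OF tau_pos strongly_convex])
      then have "2 * \<tau> * (f y - f xstar) \<le> (norm (g y))\<^sup>2" using tau_pos by (simp add: field_simps)
      then have "2 * \<tau> * (f y - f xstar) / (2 * L) \<le> (norm (g y))\<^sup>2 / (2 * L)"
        using L0 by (intro divide_right_mono) auto
      moreover have "\<tau> / L * (f y - f xstar) = 2 * \<tau> * (f y - f xstar) / (2 * L)" by simp
      ultimately show ?thesis by simp
    qed
    have "(n - \<tau> / L) * (f y - f xstar) = n * (f y - f xstar) - \<tau> / L * (f y - f xstar)"
      by (simp add: algebra_simps)
    with S G show ?thesis by linarith
  qed
  have decomp: "(\<Sum>d\<in>P (Suc k). F (Suc k) d)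
      = (\<Sum>d\<in>P k. \<Sum>i\<in>UNIV. f (cd_iter ls x0 d k + ls k (cd_iter ls x0 d k) i *\<^sub>R axis i 1) - f xstar)" for k
  proof -
    have PS: "P (Suc k) = (\<lambda>(h, y). h(k := y)) ` (P k \<times> UNIV)"
      unfolding P_def lessThan_Suc PiE_insert_eq
      by (subst swap_product [symmetric]) (simp add: image_image case_prod_unfold)
    have inj: "inj_on (\<lambda>(h, y). h(k := y)) (P k \<times> UNIV)"
      unfolding P_def by (rule inj_combinator') simp
    have "(\<Sum>d\<in>P (Suc k). F (Suc k) d) = (\<Sum>(h, y)\<in>P k \<times> UNIV. F (Suc k) (h(k := y)))"
      unfolding PS by (subst sum.reindex[OF inj]) (simp add: case_prod_unfold)
    also have "\<dots> = (\<Sum>h\<in>P k. \<Sum>y\<in>UNIV. F (Suc k) (h(k := y)))"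
      by (simp add: sum.cartesian_product)
    also have "\<dots> = (\<Sum>d\<in>P k. \<Sum>i\<in>UNIV. f (cd_iter ls x0 d k + ls k (cd_iter ls x0 d k) i *\<^sub>R axis i 1) - f xstar)"
    proof (intro sum.cong refl)
      fix h y
      have "cd_iter ls x0 (h(k := y)) k = cd_iter ls x0 h k" by (rule cd_iter_agree) simp
      then show "F (Suc k) (h(k := y)) = f (cd_iter ls x0 h k + ls k (cd_iter ls x0 h k) y *\<^sub>R axis y 1) - f xstar"
        by (simp add: F_def Let_def)
    qed
    finally show ?thesis .
  qed
  have rec: "A (Suc k) \<le> (1 - a) * A k + C" for k
  proof -
    have "(\<Sum>d\<in>P (Suc k). F (Suc k) d) \<le> (\<Sum>d\<in>P k. (n - \<tau> / L) * F k d + n * C)"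
      unfolding decomp by (unfold F_def, intro sum_mono point)
    also have "\<dots> = (n - \<tau> / L) * (\<Sum>d\<in>P k. F k d) + n * C * real N ^ k"
      by (simp add: sum.distrib sum_distrib_left cardP)
    finally have "(\<Sum>d\<in>P (Suc k). F (Suc k) d) / real N ^ Suc k
        \<le> ((n - \<tau> / L) * (\<Sum>d\<in>P k. F k d) + n * C * real N ^ k) / real N ^ Suc k"
      using N0 by (intro divide_right_mono) auto
    also have "\<dots> = (1 - a) * A k + C"
      using N0 L0 unfolding A_def a_def n_def by (simp add: field_simps)
    finally show ?thesis unfolding A_def .
  qed
  have DC: "D = (1 - a) * D + C"
    unfolding D_def a_def C_def using tau_pos L0 n1 by (simp add: field_simps power2_eq_square)
  have A0: "A 0 = f x0 - f xstar"
    unfolding A_def P_def F_def by simp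
  have bound: "A k \<le> (1 - a) ^ k * A 0 + D" for k
  proof (induction k)
    case 0 then show ?case using tau_pos L0 n1 by (simp add: D_def)
  next
    case (Suc k)
    have "A (Suc k) \<le> (1 - a) * A k + C" by (rule rec)
    also have "\<dots> \<le> (1 - a) * ((1 - a) ^ k * A 0 + D) + C"
      using Suc a1 by (intro add_right_mono mult_left_mono) auto
    also have "\<dots> = (1 - a) ^ Suc k * A 0 + D" using DC by (simp add: algebra_simps)
    finally show ?case .
  qed
  define B where "B = \<eta>\<^sup>2 * 2 * n * L\<^sup>2 / \<tau>"
  have B0: "0 < B" unfolding B_def using eta_pos L0 n1 tau_pos by simp
  have mbound: "real m \<ge> 4 / a * ln ((f x0 - f xstar) / B) - 1"
  proof -
    have "real K < (real (K div T) + 1) * real T"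
    proof -
      have "K < (K div T + 1) * T" using T_pos
        using dividend_less_div_times[OF T_pos, of K] by (simp add: algebra_simps)
      then show ?thesis by (metis of_nat_1 of_nat_add of_nat_less_iff of_nat_mult)
    qed
    then have "real K / real T < real (K div T) + 1" using T_pos by (simp add: field_simps)
    moreover have "4 / a * ln ((f x0 - f xstar) / B) \<le> real K / real T"
      using K_large T_pos unfolding a_def B_def n_def N_def by (simp add: field_simps)
    moreover have "real (K div T) \<le> real m" using iterations by simp
    ultimately show ?thesis by linarith
  qed
  have E0: "0 \<le> f x0 - f xstar" using minimizer[of x0] by simp
  have fin: "(1 - a) ^ m * (f x0 - f xstar) \<le> 7 / 4 * B"
    by (rule final_arith[OF E0 B0 a0 a1 mbound])
  have "measure_pmf.expectation (pmf_of_set ({..<m} \<rightarrow>\<^sub>E (UNIV :: 'n set)))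
           (\<lambda>d. f (cd_iter ls x0 d m) - f xstar) = A m"
    using finP[of m] neP[of m] unfolding A_def F_def P_def
    by (simp add: integral_pmf_of_set cardP[of m, unfolded P_def])
  also have "\<dots> \<le> (1 - a) ^ m * A 0 + D" by (rule bound)
  also have "\<dots> \<le> 7 / 4 * B + D" using fin A0 by simp
  also have "\<dots> = 4 * real CARD('n) * L\<^sup>2 * \<eta>\<^sup>2 / \<tau>"
    unfolding B_def D_def n_def N_def using tau_pos by (simp add: field_simps)
  finally show ?thesis .
qed

end
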